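(* Let $\Omega\subset\mathbb R^d$ be a bounded Borel set, $f:\Omega\to[0,\infty)$ bounded with $\int_\Omega f=1$, $p\ge1$, $x_1,x_2\in\Omega$, and $h_1,h_2:[0,1]\to[0,\infty)$ non-decreasing and Lipschitz continuous. For $\rho\in(0,1)$ and any Borel $\psi_0:\Omega\to[0,1]$, define recursively for $j\ge0$: $m_j=\int_\Omega(1-\psi_j)f\,dx$, $t_{j+1}=h_2(1-m_j)-h_1(m_j)$, and $$\psi_{j+1}(x)=\begin{cases}\rho\,\psi_j(x)&\text{if }\tau(x)<t_{j+1},\\ 1-\rho(1-\psi_j(x))&\text{otherwise.}\end{cases}$$ Then there exists $\bar\rho\in(0,1)$ (depending only on $\Omega,f,p,x_1,x_2,h_1,h_2$) such that, for every $\rho\in(\bar\rho,1)$ and every $\psi_0$, $\psi_j\to\bar\psi$ uniformly on every compact subset of $\Omega\setminus\{\tau=\bar t\}$.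
   Context: $\tau(x)=|x-x_1|^p-|x-x_2|^p$, $m(t)=\int_{\{x\in\Omega:\tau(x)<t\}}f\,dx$, $G(t)=h_2(1-m(t))-h_1(m(t))$. There is a unique $\bar t\in\mathbb R$ with $G(\bar t)=\bar t$, and $\bar\psi(x)=0$ if $\tau(x)<\bar t$, $\bar\psi(x)=1$ if $\tau(x)>\bar t$ (this encodes the unique equilibrium $A_1=\{\tau<\bar t\}$, $A_2=\{\tau>\bar t\}$). $\psi_j(x)\in[0,1]$ is the fraction of citizens at $x$ going to $x_2$ on day $j$. *)

theory Defs
  imports "HOL-Analysis.Analysis"
begin

definition tau :: "real \<Rightarrow> 'a::euclidean_space \<Rightarrow> 'a \<Rightarrow> 'a \<Rightarrow> real" where
  "tau p x1 x2 x = norm (x - x1) powr p - norm (x - x2) powr p"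

definition mfun :: "'a::euclidean_space set \<Rightarrow> ('a \<Rightarrow> real) \<Rightarrow> real \<Rightarrow> 'a \<Rightarrow> 'a \<Rightarrow> real \<Rightarrow> real" where
  "mfun \<Omega> f p x1 x2 t = integral {x \<in> \<Omega>. tau p x1 x2 x < t} f"

definition Gfun :: "'a::euclidean_space set \<Rightarrow> ('a \<Rightarrow> real) \<Rightarrow> real \<Rightarrow> 'a \<Rightarrow> 'a
    \<Rightarrow> (real \<Rightarrow> real) \<Rightarrow> (real \<Rightarrow> real) \<Rightarrow> real \<Rightarrow> real" where
  "Gfun \<Omega> f p x1 x2 h1 h2 t = h2 (1 - mfun \<Omega> f p x1 x2 t) - h1 (mfun \<Omega> f p x1 x2 t)"

definition tbar :: "'a::euclidean_space set \<Rightarrow> ('a \<Rightarrow> real) \<Rightarrow> real \<Rightarrow> 'a \<Rightarrow> 'a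
    \<Rightarrow> (real \<Rightarrow> real) \<Rightarrow> (real \<Rightarrow> real) \<Rightarrow> real" where
  "tbar \<Omega> f p x1 x2 h1 h2 = (THE t. Gfun \<Omega> f p x1 x2 h1 h2 t = t)"

text \<open>psi-bar: 0 where tau < t-bar, 1 where tau > t-bar (value on {tau = t-bar} irrelevant;
  we set it to 1).\<close>
definition psibar :: "'a::euclidean_space set \<Rightarrow> ('a \<Rightarrow> real) \<Rightarrow> real \<Rightarrow> 'a \<Rightarrow> 'a
    \<Rightarrow> (real \<Rightarrow> real) \<Rightarrow> (real \<Rightarrow> real) \<Rightarrow> 'a \<Rightarrow> real" where
  "psibar \<Omega> f p x1 x2 h1 h2 x =
     (if tau p x1 x2 x < tbar \<Omega> f p x1 x2 h1 h2 then 0 else 1)"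

fun psi_seq :: "'a::euclidean_space set \<Rightarrow> ('a \<Rightarrow> real) \<Rightarrow> real \<Rightarrow> 'a \<Rightarrow> 'a
    \<Rightarrow> (real \<Rightarrow> real) \<Rightarrow> (real \<Rightarrow> real) \<Rightarrow> real \<Rightarrow> ('a \<Rightarrow> real) \<Rightarrow> nat \<Rightarrow> 'a \<Rightarrow> real" where
  "psi_seq \<Omega> f p x1 x2 h1 h2 \<rho> \<psi>0 0 = \<psi>0"
| "psi_seq \<Omega> f p x1 x2 h1 h2 \<rho> \<psi>0 (Suc j) =
     (let \<psi> = psi_seq \<Omega> f p x1 x2 h1 h2 \<rho> \<psi>0 j;
          m = integral \<Omega> (\<lambda>x. (1 - \<psi> x) * f x);
          t = h2 (1 - m) - h1 m
      in (\<lambda>x. if tau p x1 x2 x < t then \<rho> * \<psi> x else 1 - \<rho> * (1 - \<psi> x)))"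

end

theory Submission
  imports Defs
begin

lemma borel_to_lon: "(g::'a::euclidean_space \<Rightarrow> real) \<in> borel_measurable borel \<Longrightarrow> g \<in> borel_measurable (lebesgue_on S)"
  by (intro measurable_restrict_space1) (simp add: measurable_completion)

lemma tau_cont: assumes "0 < p" shows "continuous_on UNIV (tau p x1 x2)"
  unfolding tau_def[abs_def]
  using assms by (intro continuous_intros continuous_on_powr') auto

lemma tau_borel: assumes "0 < p" shows "tau p x1 x2 \<in> borel_measurable borel"
  using borel_measurable_continuous_onI[OF tau_cont[OF assms]] .

lemma deriv_norm_line:
  fixes w u :: "'a::euclidean_space"
  assumes "w + t *\<^sub>R u \<noteq> 0"
  shows "((\<lambda>t. norm (w + t *\<^sub>R u)) has_real_derivative (sgn (w + t *\<^sub>R u) \<bullet> u)) (at t)"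
proof -
  have 1: "((\<lambda>t. w + t *\<^sub>R u) has_derivative (\<lambda>h. h *\<^sub>R u)) (at t)"
    by (auto intro!: derivative_eq_intros)
  have 2: "(norm has_derivative (\<lambda>h. h \<bullet> sgn (w + t *\<^sub>R u))) (at (w + t *\<^sub>R u))"
    using has_derivative_norm[OF assms] .
  have "((\<lambda>t. norm (w + t *\<^sub>R u)) has_derivative (\<lambda>h. (h *\<^sub>R u) \<bullet> sgn (w + t *\<^sub>R u))) (at t)"
    using has_derivative_compose[OF 1 2] by (simp add: o_def)
  moreover have "(\<lambda>h. (h *\<^sub>R u) \<bullet> sgn (w + t *\<^sub>R u)) = (*) (sgn (w + t *\<^sub>R u) \<bullet> u)"
    by (auto simp: inner_commute)
  ultimately show ?thesis unfolding has_field_derivative_def by simp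
qed

lemma deriv_normp_line:
  fixes w u :: "'a::euclidean_space"
  assumes "w + t *\<^sub>R u \<noteq> 0"
  shows "((\<lambda>t. norm (w + t *\<^sub>R u) powr p) has_real_derivative
           p * (norm (w + t *\<^sub>R u) powr (p - 2) * ((w + t *\<^sub>R u) \<bullet> u))) (at t)"
proof -
  let ?z = "w + t *\<^sub>R u"
  have n: "norm ?z > 0" using assms by simp
  have 1: "((\<lambda>t. norm (w + t *\<^sub>R u) powr p) has_real_derivative
      p * norm ?z powr (p - of_nat 1) * (sgn ?z \<bullet> u)) (at t)"
    by (rule DERIV_fun_powr[OF deriv_norm_line[OF assms] n])
  have "norm ?z powr (p - 1) = norm ?z powr ((p - 2) + 1)" by simp
  also have "\<dots> = norm ?z powr (p - 2) * norm ?z powr 1" by (rule powr_add)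
  also have "\<dots> = norm ?z powr (p - 2) * norm ?z" by simp
  finally have e: "norm ?z powr (p - 1) = norm ?z powr (p - 2) * norm ?z" .
  have 2: "p * norm ?z powr (p - of_nat 1) * (sgn ?z \<bullet> u) = p * (norm ?z powr (p - 2) * (?z \<bullet> u))"
    using n e by (simp add: sgn_div_norm inner_scaleR_left)
  show ?thesis using 1 unfolding 2 .
qed

definition Df :: "real \<Rightarrow> 'a::euclidean_space \<Rightarrow> 'a \<Rightarrow> 'a \<Rightarrow> real" where
  "Df p x1 x2 z = norm (z - x1) powr (p - 2) * ((z - x1) \<bullet> (x2 - x1))
                - norm (z - x2) powr (p - 2) * ((z - x2) \<bullet> (x2 - x1))"

lemma deriv_tau_line:
  fixes y x1 x2 :: "'a::euclidean_space"
  assumes "y + t *\<^sub>R (x2 - x1) \<noteq> x1" "y + t *\<^sub>R (x2 - x1) \<noteq> x2"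
  shows "((\<lambda>t. tau p x1 x2 (y + t *\<^sub>R (x2 - x1))) has_real_derivative
           p * Df p x1 x2 (y + t *\<^sub>R (x2 - x1))) (at t)"
proof -
  let ?u = "x2 - x1"
  have a: "(y - x1) + t *\<^sub>R ?u \<noteq> 0" using assms by (auto simp: algebra_simps)
  have b: "(y - x2) + t *\<^sub>R ?u \<noteq> 0" using assms by (auto simp: algebra_simps)
  have e1: "\<And>t. y + t *\<^sub>R ?u - x1 = (y - x1) + t *\<^sub>R ?u" by (simp add: algebra_simps)
  have e2: "\<And>t. y + t *\<^sub>R ?u - x2 = (y - x2) + t *\<^sub>R ?u" by (simp add: algebra_simps)
  have "((\<lambda>t. norm ((y - x1) + t *\<^sub>R ?u) powr p - norm ((y - x2) + t *\<^sub>R ?u) powr p) has_real_derivative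
     p * (norm ((y - x1) + t *\<^sub>R ?u) powr (p - 2) * (((y - x1) + t *\<^sub>R ?u) \<bullet> ?u)) -
     p * (norm ((y - x2) + t *\<^sub>R ?u) powr (p - 2) * (((y - x2) + t *\<^sub>R ?u) \<bullet> ?u))) (at t)"
    by (intro DERIV_diff deriv_normp_line a b)
  then show ?thesis unfolding tau_def Df_def e1 e2 by (simp add: algebra_simps)
qed

lemma powr_m2_mult: "(a::real) \<ge> 0 \<Longrightarrow> a powr (p - 2) * a = a powr (p - 1)"
proof (cases "a = 0")
  case False
  assume "a \<ge> 0"
  then have "a > 0" using False by simp
  have "a powr (p - 1) = a powr ((p - 2) + 1)" by simp
  also have "\<dots> = a powr (p - 2) * a powr 1" by (rule powr_add)
  finally show ?thesis using \<open>a > 0\<close> by simp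
qed simp

lemma Df_expand:
  fixes z x1 x2 :: "'a::euclidean_space"
  defines "\<alpha> \<equiv> norm (z - x1)" and "\<beta> \<equiv> norm (z - x2)" and "\<gamma> \<equiv> (z - x1) \<bullet> (z - x2)"
  shows "Df p x1 x2 z = (\<alpha> powr (p - 1) - \<beta> powr (p - 1)) * (\<alpha> - \<beta>)
                        + (\<alpha> * \<beta> - \<gamma>) * (\<alpha> powr (p - 2) + \<beta> powr (p - 2))"
proof -
  have u: "x2 - x1 = (z - x1) - (z - x2)" by simp
  have i1: "(z - x1) \<bullet> (x2 - x1) = \<alpha>^2 - \<gamma>"
    unfolding u \<alpha>_def \<gamma>_def by (simp add: inner_diff_right power2_norm_eq_inner)
  have i2: "(z - x2) \<bullet> (x2 - x1) = \<gamma> - \<beta>^2"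
    unfolding u \<beta>_def \<gamma>_def by (simp add: inner_diff_right power2_norm_eq_inner inner_commute)
  have pa: "\<alpha> powr (p - 2) * \<alpha> = \<alpha> powr (p - 1)" unfolding \<alpha>_def by (rule powr_m2_mult) simp
  have pb: "\<beta> powr (p - 2) * \<beta> = \<beta> powr (p - 1)" unfolding \<beta>_def by (rule powr_m2_mult) simp
  have "Df p x1 x2 z = \<alpha> powr (p - 2) * (\<alpha>^2 - \<gamma>) - \<beta> powr (p - 2) * (\<gamma> - \<beta>^2)"
    unfolding Df_def i1 i2 \<alpha>_def \<beta>_def by simp
  also have "\<dots> = (\<alpha> powr (p - 2) * \<alpha>) * \<alpha> + (\<beta> powr (p - 2) * \<beta>) * \<beta> - \<gamma> * (\<alpha> powr (p - 2) + \<beta> powr (p - 2))"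
    by (simp add: power2_eq_square algebra_simps)
  also have "\<dots> = (\<alpha> powr (p - 1) - \<beta> powr (p - 1)) * (\<alpha> - \<beta>)
                        + (\<alpha> * \<beta> - \<gamma>) * (\<alpha> powr (p - 2) + \<beta> powr (p - 2))"
    unfolding pa pb
    using pa pb by (simp add: algebra_simps)
  finally show ?thesis .
qed

lemma Df_nonneg: assumes "p \<ge> 1" shows "0 \<le> Df p x1 x2 z"
proof -
  define \<alpha> where "\<alpha> = norm (z - x1)"
  define \<beta> where "\<beta> = norm (z - x2)"
  define \<gamma> where "\<gamma> = (z - x1) \<bullet> (z - x2)"
  have g: "\<gamma> \<le> \<alpha> * \<beta>" unfolding \<alpha>_def \<beta>_def \<gamma>_def by (rule norm_cauchy_schwarz)
  have a0: "\<alpha> \<ge> 0" "\<beta> \<ge> 0" unfolding \<alpha>_def \<beta>_def by auto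
  have t1: "0 \<le> (\<alpha> powr (p - 1) - \<beta> powr (p - 1)) * (\<alpha> - \<beta>)"
  proof (cases "\<alpha> \<le> \<beta>")
    case True
    then have "\<alpha> powr (p - 1) \<le> \<beta> powr (p - 1)" using a0 assms by (intro powr_mono2) auto
    then show ?thesis using True by (intro mult_nonpos_nonpos) auto
  next
    case False
    then have "\<beta> powr (p - 1) \<le> \<alpha> powr (p - 1)" using a0 assms by (intro powr_mono2) auto
    then show ?thesis using False by (intro mult_nonneg_nonneg) auto
  qed
  have t2: "0 \<le> (\<alpha> * \<beta> - \<gamma>) * (\<alpha> powr (p - 2) + \<beta> powr (p - 2))"
    using g by (intro mult_nonneg_nonneg) auto
  show ?thesis unfolding Df_expand using t1 t2 \<alpha>_def \<beta>_def \<gamma>_def by simp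
qed

lemma gamma_eq:
  fixes z x1 x2 :: "'a::euclidean_space"
  shows "(norm (x2 - x1))^2 = (norm (z - x1))^2 + (norm (z - x2))^2 - 2 * ((z - x1) \<bullet> (z - x2))"
proof -
  have "x2 - x1 = (z - x1) - (z - x2)" by simp
  then have "(norm (x2 - x1))^2 = (norm ((z - x1) - (z - x2)))^2" by simp
  also have "\<dots> = (norm (z - x1))^2 + (norm (z - x2))^2 - 2 * ((z - x1) \<bullet> (z - x2))"
    by (simp add: power2_norm_eq_inner inner_diff_left inner_diff_right inner_commute)
  finally show ?thesis .
qed

lemma Df_pos_gt1: assumes "p > 1" "x1 \<noteq> x2" shows "0 < Df p x1 x2 z"
proof -
  define \<alpha> where "\<alpha> = norm (z - x1)"
  define \<beta> where "\<beta> = norm (z - x2)"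
  define \<gamma> where "\<gamma> = (z - x1) \<bullet> (z - x2)"
  have g: "\<gamma> \<le> \<alpha> * \<beta>" unfolding \<alpha>_def \<beta>_def \<gamma>_def by (rule norm_cauchy_schwarz)
  have a0: "\<alpha> \<ge> 0" "\<beta> \<ge> 0" unfolding \<alpha>_def \<beta>_def by auto
  have ge: "(norm (x2 - x1))^2 = \<alpha>^2 + \<beta>^2 - 2 * \<gamma>" unfolding \<alpha>_def \<beta>_def \<gamma>_def by (rule gamma_eq)
  have D: "norm (x2 - x1) > 0" using assms by simp
  have t2: "0 \<le> (\<alpha> * \<beta> - \<gamma>) * (\<alpha> powr (p - 2) + \<beta> powr (p - 2))"
    using g by (intro mult_nonneg_nonneg) auto
  show ?thesis
  proof (cases "\<alpha> = \<beta>")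
    case True
    have "\<alpha> > 0"
    proof (rule ccontr)
      assume "\<not> \<alpha> > 0" then have "\<alpha> = 0" using a0 by simp
      then have "z = x1" "z = x2" using True unfolding \<alpha>_def \<beta>_def by auto
      then show False using assms by simp
    qed
    have "\<gamma> < \<alpha> * \<beta>"
    proof (rule ccontr)
      assume "\<not> \<gamma> < \<alpha> * \<beta>" then have "\<gamma> = \<alpha> * \<beta>" using g by simp
      then have "(norm (x2 - x1))^2 = 0" using ge True by (simp add: power2_eq_square)
      then show False using D by simp
    qed
    moreover have "\<alpha> powr (p - 2) + \<beta> powr (p - 2) > 0" using \<open>\<alpha> > 0\<close> True by simp
    ultimately show ?thesis unfolding Df_expand \<alpha>_def[symmetric] \<beta>_def[symmetric] \<gamma>_def[symmetric]
      using True by simp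
  next
    case False
    have t1: "0 < (\<alpha> powr (p - 1) - \<beta> powr (p - 1)) * (\<alpha> - \<beta>)"
    proof (cases "\<alpha> < \<beta>")
      case True
      then have "\<alpha> powr (p - 1) < \<beta> powr (p - 1)" using a0 assms by (intro powr_less_mono2) auto
      then show ?thesis using True by (intro mult_neg_neg) auto
    next
      case False2: False
      then have "\<beta> < \<alpha>" using False by simp
      then have "\<beta> powr (p - 1) < \<alpha> powr (p - 1)" using a0 assms by (intro powr_less_mono2) auto
      then show ?thesis using \<open>\<beta> < \<alpha>\<close> by (intro mult_pos_pos) auto
    qed
    show ?thesis unfolding Df_expand \<alpha>_def[symmetric] \<beta>_def[symmetric] \<gamma>_def[symmetric]
      using t1 t2 by simp
  qed
qed

lemma tau1: "tau 1 x1 x2 z = norm (z - x1) - norm (z - x2)"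
  unfolding tau_def by simp

lemma Df_pos_1: assumes "x1 \<noteq> x2" "z \<noteq> x1" "z \<noteq> x2"
  and "tau 1 x1 x2 z \<noteq> norm (x2 - x1)" "tau 1 x1 x2 z \<noteq> - norm (x2 - x1)"
  shows "0 < Df 1 x1 x2 z"
proof -
  define \<alpha> where "\<alpha> = norm (z - x1)"
  define \<beta> where "\<beta> = norm (z - x2)"
  define \<gamma> where "\<gamma> = (z - x1) \<bullet> (z - x2)"
  have g: "\<gamma> \<le> \<alpha> * \<beta>" unfolding \<alpha>_def \<beta>_def \<gamma>_def by (rule norm_cauchy_schwarz)
  have a0: "\<alpha> > 0" "\<beta> > 0" unfolding \<alpha>_def \<beta>_def using assms by auto
  have ge: "(norm (x2 - x1))^2 = \<alpha>^2 + \<beta>^2 - 2 * \<gamma>" unfolding \<alpha>_def \<beta>_def \<gamma>_def by (rule gamma_eq)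
  have tt: "tau 1 x1 x2 z = \<alpha> - \<beta>" unfolding tau1 \<alpha>_def \<beta>_def ..
  have "\<gamma> < \<alpha> * \<beta>"
  proof (rule ccontr)
    assume "\<not> \<gamma> < \<alpha> * \<beta>" then have "\<gamma> = \<alpha> * \<beta>" using g by simp
    then have "(norm (x2 - x1))^2 = (\<alpha> - \<beta>)^2" using ge by (simp add: power2_eq_square algebra_simps)
    then have "sqrt ((norm (x2 - x1))^2) = sqrt ((\<alpha> - \<beta>)^2)" by simp
    then have "norm (x2 - x1) = \<bar>\<alpha> - \<beta>\<bar>" by simp
    then show False using assms(4,5) unfolding tt by (cases "\<alpha> \<ge> \<beta>") auto
  qed
  moreover have "\<alpha> powr (1 - 2) + \<beta> powr (1 - 2) > 0" using a0 by (intro add_pos_pos) auto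
  ultimately show ?thesis unfolding Df_expand \<alpha>_def[symmetric] \<beta>_def[symmetric] \<gamma>_def[symmetric]
    using a0 by simp
qed

lemma cont_aux:
  fixes c u :: "'a::euclidean_space"
  assumes "p > 1"
  shows "continuous_on UNIV (\<lambda>z. norm (z - c) powr (p - 2) * ((z - c) \<bullet> u))"
proof -
  have "isCont (\<lambda>z. norm (z - c) powr (p - 2) * ((z - c) \<bullet> u)) z" for z
  proof (cases "z = c")
    case False
    then show ?thesis by (intro continuous_intros) auto
  next
    case True
    have lim0: "((\<lambda>z. norm (z - c) powr (p - 2) * ((z - c) \<bullet> u)) \<longlongrightarrow> 0) (at c)"
    proof (rule Lim_null_comparison)
      show "\<forall>\<^sub>F x in at c. norm (norm (x - c) powr (p - 2) * ((x - c) \<bullet> u)) \<le> norm (x - c) powr (p - 1) * norm u"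
      proof (intro always_eventually allI)
        fix x
        have "norm (norm (x - c) powr (p - 2) * ((x - c) \<bullet> u)) = norm (x - c) powr (p - 2) * \<bar>(x - c) \<bullet> u\<bar>"
          by (simp add: abs_mult)
        also have "\<dots> \<le> norm (x - c) powr (p - 2) * (norm (x - c) * norm u)"
          by (intro mult_left_mono Cauchy_Schwarz_ineq2) auto
        also have "\<dots> = norm (x - c) powr (p - 1) * norm u"
          using powr_m2_mult[of "norm (x - c)" p] by (simp add: mult.assoc[symmetric])
        finally show "norm (norm (x - c) powr (p - 2) * ((x - c) \<bullet> u)) \<le> norm (x - c) powr (p - 1) * norm u" .
      qed
      have "((\<lambda>x. norm (x - c) powr (p - 1) * norm u) \<longlongrightarrow> 0 powr (p - 1) * norm u) (at c)"
        using assms by (intro tendsto_intros tendsto_powr') (auto intro!: tendsto_eq_intros)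
      then show "((\<lambda>x. norm (x - c) powr (p - 1) * norm u) \<longlongrightarrow> 0) (at c)" by simp
    qed
    then show ?thesis using True unfolding isCont_def by simp
  qed
  then show ?thesis by (simp add: continuous_on_eq_continuous_at)
qed

lemma Df_cont:
  assumes "p > 1 \<or> (\<forall>z\<in>S. z \<noteq> x1 \<and> z \<noteq> x2)"
  shows "continuous_on S (Df p x1 x2)"
  using assms
proof
  assume "p > 1"
  then show ?thesis unfolding Df_def[abs_def]
    by (intro continuous_on_diff continuous_on_subset[OF cont_aux] ) auto
next
  assume a: "\<forall>z\<in>S. z \<noteq> x1 \<and> z \<noteq> x2"
  show ?thesis unfolding Df_def[abs_def]
    using a by (intro continuous_intros continuous_on_powr') auto
qed

lemma line_hit_finite:
  fixes y c u :: "'a::euclidean_space"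
  assumes "u \<noteq> 0"
  shows "finite {t. y + t *\<^sub>R u = c}"
proof (rule finite_subset)
  show "{t. y + t *\<^sub>R u = c} \<subseteq> {((c - y) \<bullet> u) / (u \<bullet> u)}"
  proof
    fix t assume "t \<in> {t. y + t *\<^sub>R u = c}"
    then have "t *\<^sub>R u = c - y" by (auto simp: algebra_simps)
    then have "(t *\<^sub>R u) \<bullet> u = (c - y) \<bullet> u" by simp
    then have "t * (u \<bullet> u) = (c - y) \<bullet> u" by simp
    moreover have "u \<bullet> u \<noteq> 0" using assms by simp
    ultimately show "t \<in> {((c - y) \<bullet> u) / (u \<bullet> u)}" by (simp add: field_simps)
  qed
qed simp

lemma tau_line_incr:
  fixes y x1 x2 :: "'a::euclidean_space"
  assumes "x1 \<noteq> x2" "0 \<le> h" "0 < p"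
    and bnd: "\<And>t. 0 < t \<Longrightarrow> t < h \<Longrightarrow> y + t *\<^sub>R (x2 - x1) \<noteq> x1 \<Longrightarrow> y + t *\<^sub>R (x2 - x1) \<noteq> x2
               \<Longrightarrow> c \<le> p * Df p x1 x2 (y + t *\<^sub>R (x2 - x1))"
  shows "c * h \<le> tau p x1 x2 (y + h *\<^sub>R (x2 - x1)) - tau p x1 x2 y"
proof -
  define u where "u = x2 - x1"
  have u0: "u \<noteq> 0" using assms unfolding u_def by simp
  define g where "g t = tau p x1 x2 (y + t *\<^sub>R u)" for t
  define E where "E = {0, h} \<union> {t. y + t *\<^sub>R u = x1} \<union> {t. y + t *\<^sub>R u = x2}"
  have fE: "finite E" unfolding E_def using line_hit_finite[OF u0] by auto
  define f' where "f' t = (if t \<in> E then c else p * Df p x1 x2 (y + t *\<^sub>R u))" for t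
  have ftc: "(f' has_integral (g h - g 0)) {0..h}"
  proof (rule fundamental_theorem_of_calculus_interior_strong[OF fE \<open>0 \<le> h\<close>])
    fix t assume t: "t \<in> {0<..<h} - E"
    then have "y + t *\<^sub>R u \<noteq> x1" "y + t *\<^sub>R u \<noteq> x2" unfolding E_def by auto
    then have "(g has_real_derivative p * Df p x1 x2 (y + t *\<^sub>R u)) (at t)"
      unfolding g_def u_def by (rule deriv_tau_line)
    moreover have "f' t = p * Df p x1 x2 (y + t *\<^sub>R u)" using t unfolding f'_def by auto
    ultimately show "(g has_vector_derivative f' t) (at t)"
      by (simp add: has_real_derivative_iff_has_vector_derivative)
  next
    have "continuous_on {0..h} (\<lambda>t. y + t *\<^sub>R u)" by (intro continuous_intros)
    then show "continuous_on {0..h} g" unfolding g_def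
      using continuous_on_compose2[OF tau_cont[OF \<open>0 < p\<close>, of x1 x2]] by auto
  qed
  have cst: "((\<lambda>t. c) has_integral c * (h - 0)) {0..h}"
    using has_integral_const_real[of c 0 h] \<open>0 \<le> h\<close> by (simp add: mult.commute)
  have "c * (h - 0) \<le> g h - g 0"
  proof (rule has_integral_le[OF cst ftc])
    fix t assume t: "t \<in> {0..h}"
    show "c \<le> f' t"
    proof (cases "t \<in> E")
      case True then show ?thesis unfolding f'_def by simp
    next
      case False
      then have "0 < t" "t < h" "y + t *\<^sub>R u \<noteq> x1" "y + t *\<^sub>R u \<noteq> x2" using t unfolding E_def by auto
      then show ?thesis using bnd unfolding f'_def u_def using False by auto
    qed
  qed
  then show ?thesis unfolding g_def u_def by simp
qed

lemma tau_line_mono: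
  fixes y x1 x2 :: "'a::euclidean_space"
  assumes "p \<ge> 1" "0 \<le> v"
  shows "tau p x1 x2 y \<le> tau p x1 x2 (y + v *\<^sub>R (x2 - x1))"
proof (cases "x1 = x2")
  case True then show ?thesis by simp
next
  case False
  have "0 * v \<le> tau p x1 x2 (y + v *\<^sub>R (x2 - x1)) - tau p x1 x2 y"
    using assms by (intro tau_line_incr False) (auto intro!: mult_nonneg_nonneg Df_nonneg)
  then show ?thesis by simp
qed

lemma compact_pos_min:
  fixes g :: "'a::metric_space \<Rightarrow> real"
  assumes "compact Z" "continuous_on Z g" "\<forall>z\<in>Z. 0 < g z"
  shows "\<exists>c>0. \<forall>z\<in>Z. c \<le> g z"
proof (cases "Z = {}")
  case True then show ?thesis by (intro exI[of _ 1]) auto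
next
  case False
  obtain z0 where "z0 \<in> Z" "\<forall>z\<in>Z. g z0 \<le> g z"
    using continuous_attains_inf[OF assms(1) False assms(2)] by blast
  then show ?thesis using assms(3) by blast
qed

lemma tau1_bounds:
  shows "tau 1 x1 x2 z \<le> norm (x2 - x1)" "- norm (x2 - x1) \<le> tau 1 x1 x2 z"
proof -
  have "norm (z - x1) = norm ((z - x2) + (x2 - x1))" by simp
  then have "norm (z - x1) \<le> norm (z - x2) + norm (x2 - x1)" using norm_triangle_ineq by metis
  then show "tau 1 x1 x2 z \<le> norm (x2 - x1)" unfolding tau1 by simp
  have "norm (z - x2) = norm ((z - x1) + (x1 - x2))" by simp
  then have "norm (z - x2) \<le> norm (z - x1) + norm (x1 - x2)" using norm_triangle_ineq by metis
  then show "- norm (x2 - x1) \<le> tau 1 x1 x2 z" unfolding tau1 by (simp add: norm_minus_commute)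
qed

lemma tau_x1: "tau p x1 x2 x1 = - (norm (x2 - x1) powr p)"
  unfolding tau_def by (simp add: norm_minus_commute)
lemma tau_x2: "tau p x1 x2 x2 = norm (x2 - x1) powr p"
  unfolding tau_def by simp

definition PUSH :: "real \<Rightarrow> 'a::euclidean_space \<Rightarrow> 'a \<Rightarrow> 'a set \<Rightarrow> real \<Rightarrow> bool" where
  "PUSH p x1 x2 \<Omega> T \<longleftrightarrow> (\<exists>c>0. \<exists>\<eta>>0. \<eta> \<le> c \<and> (\<forall>y\<in>\<Omega>. \<forall>s. T - \<eta> \<le> s \<longrightarrow> s < T \<longrightarrow>
      s \<le> tau p x1 x2 y \<longrightarrow> tau p x1 x2 y < T \<longrightarrow> T \<le> tau p x1 x2 (y + ((T - s) / c) *\<^sub>R (x2 - x1))))"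

lemma push_from_bound:
  fixes \<Omega> :: "'a::euclidean_space set"
  assumes "x1 \<noteq> x2" "p \<ge> 1" "\<Omega> \<subseteq> cball 0 R" "\<epsilon> > 0" "cc > 0"
   and bnd: "\<And>z. norm z \<le> R + norm (x2 - x1) \<Longrightarrow> T - \<epsilon> \<le> tau p x1 x2 z \<Longrightarrow> tau p x1 x2 z \<le> T
               \<Longrightarrow> z \<noteq> x1 \<Longrightarrow> z \<noteq> x2 \<Longrightarrow> cc \<le> Df p x1 x2 z"
  shows "PUSH p x1 x2 \<Omega> T"
  unfolding PUSH_def
proof (intro exI conjI ballI allI impI)
  define c where "c = p * cc"
  define \<eta> where "\<eta> = min \<epsilon> c"
  show cc: "0 < c" unfolding c_def using assms by simp
  show "0 < \<eta>" unfolding \<eta>_def using cc assms by simp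
  show "\<eta> \<le> c" unfolding \<eta>_def by simp
  fix y s assume y: "y \<in> \<Omega>" and s: "T - \<eta> \<le> s" "s < T" "s \<le> tau p x1 x2 y" "tau p x1 x2 y < T"
  define u where "u = x2 - x1"
  define h where "h = (T - s) / c"
  have h0: "0 < h" unfolding h_def using s cc by simp
  have h1: "h \<le> 1"
  proof -
    have "T - s \<le> c" using s unfolding \<eta>_def by simp
    then show ?thesis unfolding h_def using cc by simp
  qed
  have ch: "c * h = T - s" unfolding h_def using cc by simp
  show "T \<le> tau p x1 x2 (y + ((T - s) / c) *\<^sub>R (x2 - x1))"
  proof (rule ccontr)
    assume neg: "\<not> T \<le> tau p x1 x2 (y + ((T - s) / c) *\<^sub>R (x2 - x1))"
    then have neg': "tau p x1 x2 (y + h *\<^sub>R u) < T" unfolding h_def u_def by simp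
    have "c * h \<le> tau p x1 x2 (y + h *\<^sub>R u) - tau p x1 x2 y"
      unfolding u_def
    proof (rule tau_line_incr)
      show "x1 \<noteq> x2" "0 \<le> h" "0 < p" using assms h0 by auto
      fix t assume t: "0 < t" "t < h" "y + t *\<^sub>R (x2 - x1) \<noteq> x1" "y + t *\<^sub>R (x2 - x1) \<noteq> x2"
      let ?z = "y + t *\<^sub>R (x2 - x1)"
      have m1: "tau p x1 x2 y \<le> tau p x1 x2 ?z" by (rule tau_line_mono[OF assms(2)]) (use t in simp)
      have "tau p x1 x2 ?z \<le> tau p x1 x2 (?z + (h - t) *\<^sub>R (x2 - x1))"
        by (rule tau_line_mono[OF assms(2)]) (use t in simp)
      also have "?z + (h - t) *\<^sub>R (x2 - x1) = y + h *\<^sub>R u" unfolding u_def by (simp add: algebra_simps)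
      finally have m2: "tau p x1 x2 ?z < T" using neg' by simp
      have "norm ?z \<le> norm y + norm (t *\<^sub>R (x2 - x1))" by (rule norm_triangle_ineq)
      also have "\<dots> \<le> R + norm (x2 - x1)"
      proof -
        have "norm y \<le> R" using y assms(3) by auto
        moreover have "norm (t *\<^sub>R (x2 - x1)) \<le> norm (x2 - x1)"
          using t h1 by (simp add: mult_left_le_one_le)
        ultimately show ?thesis by simp
      qed
      finally have nz: "norm ?z \<le> R + norm (x2 - x1)" .
      have "T - \<epsilon> \<le> tau p x1 x2 ?z" using m1 s unfolding \<eta>_def by simp
      then have "cc \<le> Df p x1 x2 ?z" using bnd nz m2 t by simp
      then show "c \<le> p * Df p x1 x2 ?z" unfolding c_def using assms by simp
    qed
    then have "T \<le> tau p x1 x2 (y + h *\<^sub>R u)" using ch s by simp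
    then show False using neg' by simp
  qed
qed

lemma bounded_cball0: "bounded (S::'a::real_normed_vector set) \<Longrightarrow> \<exists>R. S \<subseteq> cball 0 R"
  by (auto simp: bounded_iff subset_iff)

lemma push_gt1:
  fixes \<Omega> :: "'a::euclidean_space set"
  assumes "x1 \<noteq> x2" "p > 1" "bounded \<Omega>"
  shows "PUSH p x1 x2 \<Omega> T"
proof -
  obtain R where R: "\<Omega> \<subseteq> cball 0 R" using bounded_cball0[OF assms(3)] by blast
  define Z where "Z = cball 0 (R + norm (x2 - x1)) \<inter> {z. T - 1 \<le> tau p x1 x2 z \<and> tau p x1 x2 z \<le> T}"
  have cZ: "compact Z" unfolding Z_def
    using tau_cont[of p x1 x2] assms
    by (intro compact_Int_closed compact_cball closed_Collect_conj closed_Collect_le continuous_intros) auto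
  have "continuous_on Z (Df p x1 x2)" using assms by (intro Df_cont) auto
  moreover have "\<forall>z\<in>Z. 0 < Df p x1 x2 z" using Df_pos_gt1[OF assms(2,1)] by auto
  ultimately obtain c0 where c0: "c0 > 0" "\<forall>z\<in>Z. c0 \<le> Df p x1 x2 z"
    using compact_pos_min[OF cZ] by blast
  show ?thesis
    by (rule push_from_bound[where \<epsilon>=1 and cc=c0 and R=R]) (use assms c0 R in \<open>auto simp: Z_def\<close>)
qed

lemma push_1_mid:
  fixes \<Omega> :: "'a::euclidean_space set"
  assumes "x1 \<noteq> x2" "bounded \<Omega>" "- norm (x2 - x1) < T" "T < norm (x2 - x1)"
  shows "PUSH 1 x1 x2 \<Omega> T"
proof -
  obtain R where R: "\<Omega> \<subseteq> cball 0 R" using bounded_cball0[OF assms(2)] by blast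
  define \<epsilon> where "\<epsilon> = min 1 ((T + norm (x2 - x1)) / 2)"
  have e0: "\<epsilon> > 0" unfolding \<epsilon>_def using assms by simp
  define Z where "Z = cball 0 (R + norm (x2 - x1)) \<inter> {z. T - \<epsilon> \<le> tau 1 x1 x2 z \<and> tau 1 x1 x2 z \<le> T}"
  have cZ: "compact Z" unfolding Z_def
    using tau_cont[of 1 x1 x2]
    by (intro compact_Int_closed compact_cball closed_Collect_conj closed_Collect_le continuous_intros) auto
  have "T - \<epsilon> \<ge> T - (T + norm (x2 - x1)) / 2" unfolding \<epsilon>_def using min.cobounded2[of 1 "(T + norm (x2 - x1))/2"] by linarith
  moreover have "T - (T + norm (x2 - x1)) / 2 > - norm (x2 - x1)" using assms by (simp add: field_simps)
  ultimately have Te: "T - \<epsilon> > - norm (x2 - x1)" by linarith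
  have inZ: "tau 1 x1 x2 z \<noteq> norm (x2 - x1) \<and> tau 1 x1 x2 z \<noteq> - norm (x2 - x1)" if "z \<in> Z" for z
    using that assms Te unfolding Z_def by auto
  have nx: "z \<noteq> x1 \<and> z \<noteq> x2" if "z \<in> Z" for z
    using inZ[OF that] tau_x1[of 1 x1 x2] tau_x2[of 1 x1 x2] by auto
  have "continuous_on Z (Df 1 x1 x2)" using nx by (intro Df_cont) auto
  moreover have "\<forall>z\<in>Z. 0 < Df 1 x1 x2 z" using nx inZ Df_pos_1[OF assms(1)] by auto
  ultimately obtain c0 where c0: "c0 > 0" "\<forall>z\<in>Z. c0 \<le> Df 1 x1 x2 z"
    using compact_pos_min[OF cZ] by blast
  show ?thesis
    by (rule push_from_bound[OF assms(1) _ R e0 c0(1)]) (use assms c0(2) in \<open>auto simp: Z_def\<close>)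
qed

lemma push_1_low:
  assumes "T \<le> - norm (x2 - x1)"
  shows "PUSH 1 x1 x2 \<Omega> T"
proof -
  have "\<forall>y\<in>\<Omega>. \<forall>s. T - 1 \<le> s \<longrightarrow> s < T \<longrightarrow> s \<le> tau 1 x1 x2 y \<longrightarrow> tau 1 x1 x2 y < T
      \<longrightarrow> T \<le> tau 1 x1 x2 (y + ((T - s) / 1) *\<^sub>R (x2 - x1))"
  proof (intro ballI allI impI)
    fix y s assume "s \<le> tau 1 x1 x2 y" "tau 1 x1 x2 y < T"
    moreover have "- norm (x2 - x1) \<le> tau 1 x1 x2 y" by (rule tau1_bounds(2))
    ultimately show "T \<le> tau 1 x1 x2 (y + ((T - s) / 1) *\<^sub>R (x2 - x1))" using assms by linarith
  qed
  then show ?thesis unfolding PUSH_def by (intro exI[of _ "1::real"] conjI) auto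
qed

lemma push_1_high:
  assumes "T > norm (x2 - x1)"
  shows "PUSH 1 x1 x2 \<Omega> T"
  unfolding PUSH_def
proof (rule exI[of _ 1], rule conjI, simp, rule exI[of _ "min 1 ((T - norm (x2 - x1)) / 2)"], intro conjI ballI allI impI)
  show "0 < min 1 ((T - norm (x2 - x1)) / 2)" using assms by simp
  show "min 1 ((T - norm (x2 - x1)) / 2) \<le> 1" by simp
  fix y s assume "T - min 1 ((T - norm (x2 - x1)) / 2) \<le> s" "s \<le> tau 1 x1 x2 y"
  moreover have "min 1 ((T - norm (x2 - x1)) / 2) \<le> (T - norm (x2 - x1)) / 2" by (rule min.cobounded2)
  then have "2 * min 1 ((T - norm (x2 - x1)) / 2) \<le> T - norm (x2 - x1)" by (simp add: field_simps)
  moreover have "tau 1 x1 x2 y \<le> norm (x2 - x1)" by (rule tau1_bounds(1))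
  ultimately have False using assms by linarith
  then show "T \<le> tau 1 x1 x2 (y + ((T - s) / 1) *\<^sub>R (x2 - x1))" ..
qed

lemma push_dim1:
  fixes x1 x2 :: "'a::euclidean_space"
  assumes "DIM('a) = 1" "x1 \<noteq> x2"
  shows "PUSH 1 x1 x2 \<Omega> (norm (x2 - x1))"
proof -
  define u where "u = x2 - x1"
  define D where "D = norm u"
  have D0: "D > 0" using assms unfolding D_def u_def by simp
  have "dim {u} = DIM('a)" using assms unfolding u_def by simp
  then have sp: "span {u} = UNIV" using dim_eq_full by blast
  have ty: "tau 1 x1 x2 z = (\<bar>w + 1\<bar> - \<bar>w\<bar>) * D" if "z - x2 = w *\<^sub>R u" for z w
  proof -
    have "z - x1 = (w + 1) *\<^sub>R u" using that unfolding u_def by (simp add: algebra_simps)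
    then have n1: "norm (z - x1) = \<bar>w + 1\<bar> * D" unfolding D_def by simp
    have n2: "norm (z - x2) = \<bar>w\<bar> * D" using that unfolding D_def by simp
    show ?thesis unfolding tau1 n1 n2 by (simp add: algebra_simps)
  qed
  have core: "D \<le> tau 1 x1 x2 (y + ((D - s) / (2 * D)) *\<^sub>R u)"
    if s: "D - min 1 D \<le> s" "s < D" "s \<le> tau 1 x1 x2 y" for y s
  proof -
    have "y - x2 \<in> span {u}" using sp by simp
    then obtain v where v: "y - x2 = v *\<^sub>R u" by (auto simp: span_singleton)
    define \<sigma> where "\<sigma> = s / D"
    have s0: "0 \<le> s" using s D0 by linarith
    have \<sigma>1: "0 \<le> \<sigma>" "\<sigma> < 1" using s0 s(2) D0 unfolding \<sigma>_def by auto
    have "s \<le> (\<bar>v + 1\<bar> - \<bar>v\<bar>) * D" using s(3) ty[OF v] by simp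
    then have \<sigma>v: "\<sigma> \<le> \<bar>v + 1\<bar> - \<bar>v\<bar>" unfolding \<sigma>_def using D0 by (simp add: field_simps)
    define h where "h = (D - s) / (2 * D)"
    have h: "h = (1 - \<sigma>) / 2" unfolding h_def \<sigma>_def using D0 by (simp add: field_simps)
    have "0 \<le> 2 * v + (1 - \<sigma>)" using \<sigma>1 \<sigma>v by (simp add: abs_if split: if_splits; linarith)
    then have w0: "0 \<le> v + h" unfolding h by (simp add: field_simps)
    have "y + h *\<^sub>R u - x2 = (v + h) *\<^sub>R u" using v by (simp add: algebra_simps)
    then have "tau 1 x1 x2 (y + h *\<^sub>R u) = (\<bar>(v + h) + 1\<bar> - \<bar>v + h\<bar>) * D" by (rule ty)
    then have "tau 1 x1 x2 (y + h *\<^sub>R u) = D" using w0 by simp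
    then show ?thesis unfolding h_def by simp
  qed
  have md: "min 1 D \<le> 2 * D" using D0 by linarith
  show ?thesis unfolding PUSH_def
    apply (rule exI[of _ "2 * D"])
    apply (rule conjI, simp add: D0)
    apply (rule exI[of _ "min 1 D"])
    using D0 core md by (auto simp: D_def u_def)
qed

lemma tau_sets:
  assumes "0 < p" "\<Omega> \<in> sets lebesgue" "B \<in> sets borel"
  shows "{x \<in> \<Omega>. tau p x1 x2 x \<in> B} \<in> sets lebesgue"
proof -
  have "{x. tau p x1 x2 x \<in> B} \<in> sets borel"
    using measurable_sets_borel[OF tau_borel[OF assms(1)] assms(3)] by (simp add: vimage_def)
  then have "{x. tau p x1 x2 x \<in> B} \<in> sets lebesgue" by simp
  then have "\<Omega> \<inter> {x. tau p x1 x2 x \<in> B} \<in> sets lebesgue" using assms(2) by blast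
  moreover have "{x \<in> \<Omega>. tau p x1 x2 x \<in> B} = \<Omega> \<inter> {x. tau p x1 x2 x \<in> B}" by auto
  ultimately show ?thesis by simp
qed

lemma push_measure:
  fixes \<Omega> :: "'a::euclidean_space set"
  assumes push: "PUSH p x1 x2 \<Omega> T" and p: "p \<ge> 1" and bd: "bounded \<Omega>" and ms: "\<Omega> \<in> sets lebesgue"
  shows "\<exists>C \<eta>. \<eta> > 0 \<and> (\<forall>s. T - \<eta> \<le> s \<longrightarrow> s < T \<longrightarrow>
            measure lebesgue {x\<in>\<Omega>. s \<le> tau p x1 x2 x \<and> tau p x1 x2 x < T} \<le> C * (T - s))"
proof -
  obtain c \<eta> where c: "c > 0" "\<eta> > 0" "\<eta> \<le> c" and
    P: "\<And>y s. y \<in> \<Omega> \<Longrightarrow> T - \<eta> \<le> s \<Longrightarrow> s < T \<Longrightarrow> s \<le> tau p x1 x2 y \<Longrightarrow> tau p x1 x2 y < T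
           \<Longrightarrow> T \<le> tau p x1 x2 (y + ((T - s) / c) *\<^sub>R (x2 - x1))"
    using push unfolding PUSH_def by blast
  obtain R where R: "\<Omega> \<subseteq> cball 0 R" using bounded_cball0[OF bd] by blast
  define u where "u = x2 - x1"
  define V where "V = measure lebesgue (cball (0::'a) (R + 2 * norm u))"
  have V0: "V \<ge> 0" unfolding V_def by simp
  show ?thesis
  proof (rule exI[of _ "V / c"], rule exI[of _ "\<eta>"], intro conjI allI impI)
    show "\<eta> > 0" by fact
    fix s assume s: "T - \<eta> \<le> s" "s < T"
    define S where "S = {x\<in>\<Omega>. s \<le> tau p x1 x2 x \<and> tau p x1 x2 x < T}"
    have Sset: "S \<in> sets lebesgue" unfolding S_def using tau_sets[OF _ ms, of p "{s..<T}" x1 x2] p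
      by (simp add: atLeastLessThan_def atLeast_def lessThan_def)
    have Sb: "bounded S" using bd unfolding S_def by (rule bounded_subset) auto
    have Sm: "S \<in> lmeasurable" using bounded_set_imp_lmeasurable[OF Sb Sset] .
    define h where "h = (T - s) / c"
    have h0: "0 < h" "h \<le> 1" unfolding h_def using s c by (auto simp: field_simps)
    define N where "N = nat \<lceil>1 / h\<rceil>"
    have Nc: "real N = of_int \<lceil>1 / h\<rceil>" unfolding N_def using h0 by simp
    have N1: "real N \<ge> 1 / h" unfolding Nc by (rule le_of_int_ceiling)
    have N2: "real N \<le> 1 / h + 1" unfolding Nc by (rule of_int_ceiling_le_add_one)
    have Npos: "real N > 0" using N1 h0 by (smt (verit) divide_pos_pos)
    have Nh: "real N * h \<le> 2"
    proof -
      have "real N * h \<le> (1 / h + 1) * h" using N2 h0 by (intro mult_right_mono) auto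
      also have "\<dots> = 1 + h" using h0 by (simp add: field_simps)
      finally show ?thesis using h0 by simp
    qed
    define A where "A k = (+) ((real k * h) *\<^sub>R u) ` S" for k :: nat
    have push1: "T \<le> tau p x1 x2 (x + h *\<^sub>R u)" if "x \<in> S" for x
      using P[of x s] that s unfolding S_def h_def u_def by auto
    have far: "T \<le> tau p x1 x2 (x + (real k * h) *\<^sub>R u)" if "x \<in> S" "k \<ge> 1" for x k
    proof -
      have "T \<le> tau p x1 x2 (x + h *\<^sub>R u)" using push1[OF that(1)] .
      also have "\<dots> \<le> tau p x1 x2 ((x + h *\<^sub>R u) + ((real k - 1) * h) *\<^sub>R (x2 - x1))"
        using that h0 by (intro tau_line_mono p) auto
      also have "(x + h *\<^sub>R u) + ((real k - 1) * h) *\<^sub>R (x2 - x1) = x + (real k * h) *\<^sub>R u"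
        unfolding u_def by (simp add: algebra_simps)
      finally show ?thesis .
    qed
    have disj: "disjoint_family_on A {..<N}"
      unfolding disjoint_family_on_def
    proof (intro ballI impI)
      have key: "A i \<inter> A j = {}" if "i < j" for i j
      proof (rule ccontr)
        assume "A i \<inter> A j \<noteq> {}"
        then obtain x x' where x: "x \<in> S" "x' \<in> S" and e: "(real i * h) *\<^sub>R u + x = (real j * h) *\<^sub>R u + x'"
          unfolding A_def by auto
        have "x = x' + (real (j - i) * h) *\<^sub>R u" using e that
          by (simp add: algebra_simps of_nat_diff scaleR_diff_left)
        then have "T \<le> tau p x1 x2 x" using far[OF x(2), of "j - i"] that by simp
        then show False using x(1) unfolding S_def by simp
      qed
      fix i j assume "i \<in> {..<N}" "j \<in> {..<N}" "i \<noteq> j"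
      then show "A i \<inter> A j = {}" using key[of i j] key[of j i] by (cases "i < j") auto
    qed
    have Am: "A k \<in> lmeasurable" for k unfolding A_def using measurable_translation[OF Sm] .
    have Ameas: "measure lebesgue (A k) = measure lebesgue S" for k
      unfolding A_def by (rule measure_translation)
    have "measure lebesgue (\<Union>k\<in>{..<N}. A k) = (\<Sum>k\<in>{..<N}. measure lebesgue (A k))"
      using Am disj fmeasurableD2[OF Am] by (intro measure_finite_Union) auto
    also have "\<dots> = real N * measure lebesgue S" using Ameas by simp
    finally have U: "measure lebesgue (\<Union>k\<in>{..<N}. A k) = real N * measure lebesgue S" .
    have sub: "(\<Union>k\<in>{..<N}. A k) \<subseteq> cball 0 (R + 2 * norm u)"
    proof
      fix z assume "z \<in> (\<Union>k\<in>{..<N}. A k)"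
      then obtain k x where k: "k < N" and x: "x \<in> S" and z: "z = (real k * h) *\<^sub>R u + x"
        unfolding A_def by auto
      have kh: "real k * h \<le> 2" using k Nh h0
        by (smt (verit) mult_right_mono of_nat_less_iff)
      have "norm z \<le> norm ((real k * h) *\<^sub>R u) + norm x" unfolding z by (rule norm_triangle_ineq)
      also have "\<dots> = (real k * h) * norm u + norm x" using h0 by simp
      also have "\<dots> \<le> 2 * norm u + R"
        using x R kh unfolding S_def by (intro add_mono mult_right_mono) auto
      finally show "z \<in> cball 0 (R + 2 * norm u)" by simp
    qed
    have "measure lebesgue (\<Union>k\<in>{..<N}. A k) \<le> V" unfolding V_def
      using Am sub by (intro measure_mono_fmeasurable) (auto intro!: sets.finite_UN)
    then have "real N * measure lebesgue S \<le> V" using U by simp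
    then have "measure lebesgue S \<le> V / real N" using Npos by (simp add: field_simps)
    also have "\<dots> \<le> V * h"
    proof -
      have "1 / real N \<le> h" using N1 h0 Npos by (simp add: field_simps)
      then show ?thesis using V0 by (metis divide_inverse inverse_eq_divide mult_left_mono)
    qed
    also have "\<dots> = V / c * (T - s)" unfolding h_def by simp
    finally show "measure lebesgue {x\<in>\<Omega>. s \<le> tau p x1 x2 x \<and> tau p x1 x2 x < T} \<le> V / c * (T - s)"
      unfolding S_def .
  qed
qed

lemma mass_full_dim2:
  fixes x1 x2 :: "'a::euclidean_space"
  assumes "DIM('a) \<noteq> 1" "x1 \<noteq> x2" "(f has_integral 1) \<Omega>"
  shows "mfun \<Omega> f 1 x1 x2 (norm (x2 - x1)) = 1"
proof -
  define u where "u = x2 - x1"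
  define D where "D = norm u"
  have D0: "D > 0" using assms unfolding D_def u_def by simp
  have sub: "{x. tau 1 x1 x2 x = D} \<subseteq> (+) x2 ` span {u}"
  proof
    fix x assume "x \<in> {x. tau 1 x1 x2 x = D}"
    then have e: "norm (x - x1) = norm (x - x2) + norm u" unfolding tau1 D_def by simp
    have eq: "(x - x2) + u = x - x1" unfolding u_def by simp
    have "norm ((x - x2) + u) = norm (x - x2) + norm u" unfolding eq using e .
    then have h: "norm (x - x2) *\<^sub>R u = norm u *\<^sub>R (x - x2)" using norm_triangle_eq by blast
    have "x - x2 = inverse D *\<^sub>R (D *\<^sub>R (x - x2))" using D0 by simp
    also have "D *\<^sub>R (x - x2) = norm (x - x2) *\<^sub>R u" using h unfolding D_def by simp
    finally have "x - x2 = (inverse D * norm (x - x2)) *\<^sub>R u" by simp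
    then have "x - x2 \<in> span {u}" unfolding span_singleton by blast
    moreover have "x = x2 + (x - x2)" by simp
    ultimately show "x \<in> (+) x2 ` span {u}" by blast
  qed
  have "DIM('a) \<ge> 1" by (simp add: DIM_positive Suc_leI)
  then have "1 < DIM('a)" using assms(1) by linarith
  then have "dim (span {u}) < DIM('a)" using D0 unfolding D_def by (simp add: dim_span)
  then have "negligible (span {u})" by (rule negligible_lowdim)
  then have neg: "negligible {x. tau 1 x1 x2 x = D}"
    by (rule negligible_subset[OF negligible_translation sub])
  have "integral \<Omega> f = integral {x\<in>\<Omega>. tau 1 x1 x2 x < D} f"
  proof (rule integral_spike_set)
    show "negligible {x \<in> \<Omega> - {x\<in>\<Omega>. tau 1 x1 x2 x < D}. f x \<noteq> 0}"
    proof (rule negligible_subset[OF neg])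
      show "{x \<in> \<Omega> - {x\<in>\<Omega>. tau 1 x1 x2 x < D}. f x \<noteq> 0} \<subseteq> {x. tau 1 x1 x2 x = D}"
      proof
        fix x assume "x \<in> {x \<in> \<Omega> - {x\<in>\<Omega>. tau 1 x1 x2 x < D}. f x \<noteq> 0}"
        then have "\<not> tau 1 x1 x2 x < D" by simp
        moreover have "tau 1 x1 x2 x \<le> D" unfolding D_def u_def by (rule tau1_bounds(1))
        ultimately show "x \<in> {x. tau 1 x1 x2 x = D}" by simp
      qed
    qed
  qed (rule negligible_subset[OF negligible_empty], auto)
  then show ?thesis using assms(3) unfolding mfun_def D_def u_def by (simp add: integral_unique)
qed

lemma prod_int:
  fixes f g :: "'a::euclidean_space \<Rightarrow> real"
  assumes "f absolutely_integrable_on \<Omega>" "\<Omega> \<in> sets lebesgue" "g \<in> borel_measurable borel"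
    "\<forall>x\<in>\<Omega>. \<bar>g x\<bar> \<le> C"
  shows "(\<lambda>x. g x * f x) absolutely_integrable_on \<Omega>"
proof (rule absolutely_integrable_bounded_measurable_product[OF bilinear_times])
  show "g \<in> borel_measurable (lebesgue_on \<Omega>)" using assms(3) by (rule borel_to_lon)
  show "bounded (g ` \<Omega>)" using assms(4) unfolding bounded_iff by auto
qed (use assms in auto)

lemma ind_int:
  fixes f :: "'a::euclidean_space \<Rightarrow> real"
  assumes fa: "f absolutely_integrable_on \<Omega>" and ms: "\<Omega> \<in> sets lebesgue" and p: "0 < p" and B: "B \<in> sets borel"
  shows "integral {x\<in>\<Omega>. tau p x1 x2 x \<in> B} f = integral \<Omega> (\<lambda>x. (if tau p x1 x2 x \<in> B then 1 else 0) * f x)"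
    and "(\<lambda>x. (if tau p x1 x2 x \<in> B then 1 else 0) * f x) absolutely_integrable_on \<Omega>"
    and "f integrable_on {x\<in>\<Omega>. tau p x1 x2 x \<in> B}"
proof -
  define S where "S = {x. tau p x1 x2 x \<in> B}"
  have eq: "(\<lambda>x. (if tau p x1 x2 x \<in> B then 1 else 0) * f x) = (\<lambda>x. if x \<in> S then f x else 0)"
    unfolding S_def by auto
  have SO: "S \<inter> \<Omega> = {x\<in>\<Omega>. tau p x1 x2 x \<in> B}" unfolding S_def by auto
  have Sb: "{x. tau p x1 x2 x \<in> B} \<in> sets borel"
    using measurable_sets_borel[OF tau_borel[OF p] B] by (simp add: vimage_def)
  have gm: "(\<lambda>x. if tau p x1 x2 x \<in> B then 1 else (0::real)) \<in> borel_measurable borel"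
    by (rule measurable_If) (use Sb in auto)
  show ai: "(\<lambda>x. (if tau p x1 x2 x \<in> B then 1 else 0) * f x) absolutely_integrable_on \<Omega>"
    by (rule prod_int[OF fa ms gm, of 1]) auto
  show "integral {x\<in>\<Omega>. tau p x1 x2 x \<in> B} f = integral \<Omega> (\<lambda>x. (if tau p x1 x2 x \<in> B then 1 else 0) * f x)"
    unfolding eq integral_restrict_Int SO ..
  have "(\<lambda>x. if x \<in> S then f x else 0) integrable_on \<Omega>" using ai unfolding eq
    using absolutely_integrable_on_def by blast
  then show "f integrable_on {x\<in>\<Omega>. tau p x1 x2 x \<in> B}" unfolding integrable_restrict_Int SO .
qed

lemma mfun_int:
  fixes f :: "'a::euclidean_space \<Rightarrow> real"
  assumes "f absolutely_integrable_on \<Omega>" "\<Omega> \<in> sets lebesgue" "0 < p"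
  shows "mfun \<Omega> f p x1 x2 t = integral \<Omega> (\<lambda>x. (if tau p x1 x2 x \<in> {..<t} then 1 else 0) * f x)"
proof -
  have "mfun \<Omega> f p x1 x2 t = integral {x\<in>\<Omega>. tau p x1 x2 x \<in> {..<t}} f" unfolding mfun_def by simp
  also have "\<dots> = integral \<Omega> (\<lambda>x. (if tau p x1 x2 x \<in> {..<t} then 1 else 0) * f x)"
    by (rule ind_int(1)[OF assms]) simp
  finally show ?thesis .
qed

lemma mfun_diff:
  fixes f :: "'a::euclidean_space \<Rightarrow> real"
  assumes fa: "f absolutely_integrable_on \<Omega>" and ms: "\<Omega> \<in> sets lebesgue" and p: "0 < p" and tT: "t \<le> T"
  shows "mfun \<Omega> f p x1 x2 T - mfun \<Omega> f p x1 x2 t = integral {x\<in>\<Omega>. tau p x1 x2 x \<in> {t..<T}} f"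
proof -
  let ?I = "\<lambda>B x. (if tau p x1 x2 x \<in> B then 1 else 0) * f x"
  have a1: "?I {..<T} absolutely_integrable_on \<Omega>" by (rule ind_int(2)[OF fa ms p]) simp
  have a2: "?I {..<t} absolutely_integrable_on \<Omega>" by (rule ind_int(2)[OF fa ms p]) simp
  have i1: "?I {..<T} integrable_on \<Omega>" "?I {..<t} integrable_on \<Omega>"
    using a1 a2 unfolding absolutely_integrable_on_def by blast+
  have eq: "(\<lambda>x. ?I {..<T} x - ?I {..<t} x) = ?I {t..<T}" using tT by (auto simp: fun_eq_iff)
  have "mfun \<Omega> f p x1 x2 T - mfun \<Omega> f p x1 x2 t = integral \<Omega> (\<lambda>x. ?I {..<T} x - ?I {..<t} x)"
    unfolding mfun_int[OF fa ms p] using integral_diff[OF i1] by simp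
  also have "\<dots> = integral \<Omega> (?I {t..<T})" unfolding eq ..
  also have "\<dots> = integral {x\<in>\<Omega>. tau p x1 x2 x \<in> {t..<T}} f"
    by (rule ind_int(1)[OF fa ms p, symmetric]) simp
  finally show ?thesis .
qed

lemma mfun_01:
  fixes f :: "'a::euclidean_space \<Rightarrow> real"
  assumes fa: "f absolutely_integrable_on \<Omega>" and ms: "\<Omega> \<in> sets lebesgue" and p: "0 < p"
    and fnn: "\<forall>x\<in>\<Omega>. 0 \<le> f x" and f1: "(f has_integral 1) \<Omega>"
  shows "0 \<le> mfun \<Omega> f p x1 x2 t" "mfun \<Omega> f p x1 x2 t \<le> 1"
proof -
  have fi: "f integrable_on {x\<in>\<Omega>. tau p x1 x2 x \<in> {..<t}}" by (rule ind_int(3)[OF fa ms p]) simp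
  have e: "mfun \<Omega> f p x1 x2 t = integral {x\<in>\<Omega>. tau p x1 x2 x \<in> {..<t}} f" unfolding mfun_def by simp
  show "0 \<le> mfun \<Omega> f p x1 x2 t" unfolding e using fi fnn by (intro integral_nonneg) auto
  have "integral {x\<in>\<Omega>. tau p x1 x2 x \<in> {..<t}} f \<le> integral \<Omega> f"
    using fi f1 fnn by (intro integral_subset_le) auto
  then show "mfun \<Omega> f p x1 x2 t \<le> 1" unfolding e using f1 by (simp add: integral_unique)
qed

lemma mfun_mono:
  fixes f :: "'a::euclidean_space \<Rightarrow> real"
  assumes fa: "f absolutely_integrable_on \<Omega>" and ms: "\<Omega> \<in> sets lebesgue" and p: "0 < p"
    and fnn: "\<forall>x\<in>\<Omega>. 0 \<le> f x" and tT: "t \<le> T"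
  shows "mfun \<Omega> f p x1 x2 t \<le> mfun \<Omega> f p x1 x2 T"
proof -
  have "0 \<le> integral {x\<in>\<Omega>. tau p x1 x2 x \<in> {t..<T}} f"
    using ind_int(3)[OF fa ms p, of "{t..<T}"] fnn by (intro integral_nonneg) auto
  moreover have "mfun \<Omega> f p x1 x2 T - mfun \<Omega> f p x1 x2 t = integral {x\<in>\<Omega>. tau p x1 x2 x \<in> {t..<T}} f"
    by (rule mfun_diff[OF fa ms p tT])
  ultimately show ?thesis by linarith
qed

lemma slab_bound:
  fixes \<Omega> :: "'a::euclidean_space set" and f :: "'a \<Rightarrow> real"
  assumes p: "p \<ge> 1" and bd: "bounded \<Omega>" and ms: "\<Omega> \<in> sets lebesgue"
    and fa: "f absolutely_integrable_on \<Omega>" and fnn: "\<forall>x\<in>\<Omega>. 0 \<le> f x" and fB: "\<forall>x\<in>\<Omega>. f x \<le> B"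
    and f1: "(f has_integral 1) \<Omega>" and lt: "mfun \<Omega> f p x1 x2 T < 1"
  shows "\<exists>\<Lambda>\<ge>0. \<forall>t<T. mfun \<Omega> f p x1 x2 T - mfun \<Omega> f p x1 x2 t \<le> \<Lambda> * (T - t)"
proof (cases "x1 = x2")
  case True
  have t0: "tau p x1 x2 x = 0" for x using True unfolding tau_def by simp
  have "T \<le> 0"
  proof (rule ccontr)
    assume "\<not> T \<le> 0"
    then have "{x\<in>\<Omega>. tau p x1 x2 x < T} = \<Omega>" using t0 by auto
    then have "mfun \<Omega> f p x1 x2 T = 1" using f1 unfolding mfun_def by (simp add: integral_unique)
    then show False using lt by simp
  qed
  then have "\<forall>t<T. mfun \<Omega> f p x1 x2 T - mfun \<Omega> f p x1 x2 t \<le> 0 * (T - t)"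
    using t0 unfolding mfun_def by simp
  then show ?thesis by blast
next
  case False
  have p0: "0 < p" using p by simp
  have push: "PUSH p x1 x2 \<Omega> T"
  proof (cases "p > 1")
    case True then show ?thesis using push_gt1[OF False True bd] by simp
  next
    case False2: False
    then have p1: "p = 1" using p by simp
    consider "T \<le> - norm (x2 - x1)" | "- norm (x2 - x1) < T \<and> T < norm (x2 - x1)"
      | "T > norm (x2 - x1)" | "T = norm (x2 - x1)" by linarith
    then show ?thesis
    proof cases
      case 1 then show ?thesis unfolding p1 by (rule push_1_low)
    next
      case 2 then show ?thesis unfolding p1 using push_1_mid[OF False bd] by simp
    next
      case 3 then show ?thesis unfolding p1 by (rule push_1_high)
    next
      case 4
      show ?thesis
      proof (cases "DIM('a) = 1")
        case True then show ?thesis unfolding p1 4 using push_dim1[OF True False] by simp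
      next
        case F: False
        have "mfun \<Omega> f 1 x1 x2 (norm (x2 - x1)) = 1" by (rule mass_full_dim2[OF F False f1])
        then show ?thesis using lt unfolding p1 4 by simp
      qed
    qed
  qed
  obtain C \<eta> where \<eta>: "\<eta> > 0" and C: "\<And>s. T - \<eta> \<le> s \<Longrightarrow> s < T \<Longrightarrow>
      measure lebesgue {x\<in>\<Omega>. s \<le> tau p x1 x2 x \<and> tau p x1 x2 x < T} \<le> C * (T - s)"
    using push_measure[OF push p bd ms] by blast
  define B' where "B' = max B 0"
  have B': "B' \<ge> 0" "\<forall>x\<in>\<Omega>. f x \<le> B'" using fB unfolding B'_def by auto
  define \<Lambda> where "\<Lambda> = max (B' * C) (1 / \<eta>)"
  have \<Lambda>0: "\<Lambda> \<ge> 0" unfolding \<Lambda>_def using \<eta> by (simp add: le_max_iff_disj)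
  have "mfun \<Omega> f p x1 x2 T - mfun \<Omega> f p x1 x2 t \<le> \<Lambda> * (T - t)" if t: "t < T" for t
  proof (cases "T - \<eta> \<le> t")
    case True
    define S where "S = {x\<in>\<Omega>. tau p x1 x2 x \<in> {t..<T}}"
    have S_eq: "S = {x\<in>\<Omega>. t \<le> tau p x1 x2 x \<and> tau p x1 x2 x < T}" unfolding S_def by auto
    have Sset: "S \<in> sets lebesgue" unfolding S_def by (rule tau_sets[OF p0 ms]) simp
    have Sm: "S \<in> lmeasurable"
      by (rule bounded_set_imp_lmeasurable[OF bounded_subset[OF bd] Sset]) (auto simp: S_def)
    have "mfun \<Omega> f p x1 x2 T - mfun \<Omega> f p x1 x2 t = integral S f"
      unfolding S_def using mfun_diff[OF fa ms p0, of t T] t by simp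
    also have "\<dots> \<le> integral S (\<lambda>x. B')"
      using ind_int(3)[OF fa ms p0, of "{t..<T}"] B' integrable_on_const[OF Sm]
      by (intro integral_le) (auto simp: S_def)
    also have "\<dots> = B' * measure lebesgue S" using lmeasure_integral[OF Sm] integral_cmul[where c=B' and f="\<lambda>x. 1::real" and S=S]
      by simp
    also have "\<dots> \<le> B' * (C * (T - t))"
      using C[OF True t] B'(1) unfolding S_eq by (intro mult_left_mono) auto
    also have "\<dots> \<le> \<Lambda> * (T - t)" unfolding \<Lambda>_def using t
      by (simp add: mult.assoc[symmetric] mult_right_mono)
    finally show ?thesis .
  next
    case False
    have "mfun \<Omega> f p x1 x2 T - mfun \<Omega> f p x1 x2 t \<le> 1"
      using mfun_01[OF fa ms p0 fnn f1, of x1 x2 T] mfun_01[OF fa ms p0 fnn f1, of x1 x2 t] by simp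
    also have "1 \<le> (1 / \<eta>) * (T - t)" using False \<eta> by (simp add: field_simps)
    also have "\<dots> \<le> \<Lambda> * (T - t)" unfolding \<Lambda>_def using t by (intro mult_right_mono) auto
    finally show ?thesis .
  qed
  then show ?thesis using \<Lambda>0 by blast
qed

lemma dyn_conv:
  fixes m F :: "nat \<Rightarrow> real"
  assumes rec: "\<And>j. m (Suc j) = \<rho> * m j + (1 - \<rho>) * F j"
    and below: "\<And>j. m j \<le> ms \<Longrightarrow> ms \<le> F j"
    and above: "\<And>j. ms \<le> m j \<Longrightarrow> F j \<le> ms \<and> ms - F j \<le> \<Lambda> * (m j - ms)"
    and r: "0 < \<rho>" "\<rho> < 1" "(1 - \<rho>) * \<Lambda> \<le> \<rho>"
    and bnd: "\<And>j. \<bar>m j - ms\<bar> \<le> 1"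
  shows "m \<longlonglongrightarrow> ms"
proof -
  define e where "e j = m j - ms" for j
  have ea: "0 \<le> e (Suc j) \<and> e (Suc j) \<le> \<rho> * e j" if "0 \<le> e j" for j
  proof -
    have A: "F j \<le> ms" "ms - F j \<le> \<Lambda> * e j" using above[of j] that unfolding e_def by auto
    have eS: "e (Suc j) = \<rho> * e j + (1 - \<rho>) * (F j - ms)" unfolding e_def rec by (simp add: algebra_simps)
    have "(1 - \<rho>) * (F j - ms) \<le> 0" using A r by (intro mult_nonneg_nonpos) auto
    moreover have "(1 - \<rho>) * (F j - ms) \<ge> - (((1 - \<rho>) * \<Lambda>) * e j)"
    proof -
      have "(1 - \<rho>) * (ms - F j) \<le> (1 - \<rho>) * (\<Lambda> * e j)" using A r by (intro mult_left_mono) auto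
      then show ?thesis by (simp add: algebra_simps)
    qed
    moreover have "((1 - \<rho>) * \<Lambda>) * e j \<le> \<rho> * e j" using r that by (intro mult_right_mono) auto
    ultimately show ?thesis unfolding eS by linarith
  qed
  have eb: "\<rho> * e j \<le> e (Suc j)" if "e j < 0" for j
  proof -
    have "ms \<le> F j" using below[of j] that unfolding e_def by auto
    then have "0 \<le> (1 - \<rho>) * (F j - ms)" using r by simp
    moreover have eS: "e (Suc j) = \<rho> * e j + (1 - \<rho>) * (F j - ms)" unfolding e_def rec by (simp add: algebra_simps)
    ultimately show ?thesis by linarith
  qed
  have eb1: "\<bar>e j\<bar> \<le> 1" for j unfolding e_def by (rule bnd)
  have lim_pow: "(\<lambda>i. \<rho> ^ i) \<longlonglongrightarrow> 0" using r by (intro LIMSEQ_realpow_zero) auto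
  have "e \<longlonglongrightarrow> 0"
  proof (cases "\<exists>k. 0 \<le> e k")
    case True
    then obtain k where k: "0 \<le> e k" by blast
    have kk: "0 \<le> e (i + k) \<and> e (i + k) \<le> \<rho> ^ i" for i
    proof (induction i)
      case 0 then show ?case using k eb1[of k] by simp
    next
      case (Suc i)
      then have "0 \<le> e (Suc (i + k)) \<and> e (Suc (i + k)) \<le> \<rho> * e (i + k)" using ea by blast
      moreover have "\<rho> * e (i + k) \<le> \<rho> * \<rho> ^ i" using Suc r by (intro mult_left_mono) auto
      ultimately show ?case by simp
    qed
    have "(\<lambda>i. e (i + k)) \<longlonglongrightarrow> 0"
      by (rule Lim_null_comparison[OF _ lim_pow]) (use kk in auto)
    then show ?thesis by (rule LIMSEQ_offset)
  next
    case False
    then have neg: "e j < 0" for j using not_le by blast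
    have kk: "- e i \<le> \<rho> ^ i" for i
    proof (induction i)
      case 0 then show ?case using eb1[of 0] by simp
    next
      case (Suc i)
      have "\<rho> * e i \<le> e (Suc i)" using eb neg by blast
      moreover have "\<rho> * (- e i) \<le> \<rho> * \<rho> ^ i" using Suc r by (intro mult_left_mono) auto
      ultimately show ?case by simp
    qed
    show ?thesis
      by (rule Lim_null_comparison[OF _ lim_pow]) (use kk neg in \<open>auto simp: abs_if\<close>)
  qed
  then have "(\<lambda>j. e j + ms) \<longlonglongrightarrow> 0 + ms" by (intro tendsto_intros)
  then show ?thesis unfolding e_def by simp
qed
theorem theorem5p5:
  fixes \<Omega> :: "'a::euclidean_space set"
    and f :: "'a \<Rightarrow> real" and p :: real and x1 x2 :: 'a
    and h1 h2 :: "real \<Rightarrow> real"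
  assumes \<Omega>_borel: "\<Omega> \<in> sets borel" and \<Omega>_bdd: "bounded \<Omega>"
    and f_nonneg: "\<forall>x\<in>\<Omega>. f x \<ge> 0"
    and f_bdd: "\<exists>B. \<forall>x\<in>\<Omega>. f x \<le> B"
    and f_int: "(f has_integral 1) \<Omega>"
    and p_ge: "p \<ge> 1"
    and x1: "x1 \<in> \<Omega>" and x2: "x2 \<in> \<Omega>"
    and h1_mono: "mono_on {0..1} h1" and h2_mono: "mono_on {0..1} h2"
    and h1_nonneg: "\<forall>s\<in>{0..1}. h1 s \<ge> 0" and h2_nonneg: "\<forall>s\<in>{0..1}. h2 s \<ge> 0"
    and h1_lip: "\<exists>L. L-lipschitz_on {0..1} h1"
    and h2_lip: "\<exists>L. L-lipschitz_on {0..1} h2"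
    and fixpt: "\<exists>!t. Gfun \<Omega> f p x1 x2 h1 h2 t = t"
  shows "\<exists>\<rho>bar \<in> {0<..<1}. \<forall>\<rho> \<in> {\<rho>bar<..<1}. \<forall>\<psi>0.
           \<psi>0 \<in> borel_measurable borel \<and> (\<forall>x\<in>\<Omega>. \<psi>0 x \<in> {0..1}) \<longrightarrow>
           (\<forall>K. compact K \<and> K \<subseteq> \<Omega> - {x. tau p x1 x2 x = tbar \<Omega> f p x1 x2 h1 h2} \<longrightarrow>
              uniform_limit K (psi_seq \<Omega> f p x1 x2 h1 h2 \<rho> \<psi>0)
                (psibar \<Omega> f p x1 x2 h1 h2) sequentially)"
proof -
  have p0: "0 < p" using p_ge by simp
  have ms: "\<Omega> \<in> sets lebesgue" using \<Omega>_borel by simp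
  have fi: "f integrable_on \<Omega>" using f_int by blast
  have fa: "f absolutely_integrable_on \<Omega>" using nonnegative_absolutely_integrable_1[OF fi] f_nonneg by blast
  obtain B where fB: "\<forall>x\<in>\<Omega>. f x \<le> B" using f_bdd by blast
  obtain L1 where L1: "L1-lipschitz_on {0..1} h1" using h1_lip by blast
  obtain L2 where L2: "L2-lipschitz_on {0..1} h2" using h2_lip by blast
  define L where "L = L1 + L2"
  have L0: "0 \<le> L" using L1 L2 unfolding L_def lipschitz_on_def by auto
  define M where "M = mfun \<Omega> f p x1 x2"
  define H where "H m = h2 (1 - m) - h1 m" for m
  define tb where "tb = tbar \<Omega> f p x1 x2 h1 h2"
  have Gtb: "Gfun \<Omega> f p x1 x2 h1 h2 tb = tb" unfolding tb_def tbar_def by (rule theI'[OF fixpt])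
  define mst where "mst = M tb"
  have Hm: "H mst = tb" using Gtb unfolding Gfun_def H_def mst_def M_def .
  have M01: "0 \<le> M t" "M t \<le> 1" for t
    unfolding M_def using mfun_01[OF fa ms p0 f_nonneg f_int] by auto
  have Mmono: "M t \<le> M t'" if "t \<le> t'" for t t'
    unfolding M_def using mfun_mono[OF fa ms p0 f_nonneg that] .
  have Hanti: "H b \<le> H a" if "a \<in> {0..1}" "b \<in> {0..1}" "a \<le> b" for a b
  proof -
    have "h2 (1 - b) \<le> h2 (1 - a)" using that by (intro mono_onD[OF h2_mono]) auto
    moreover have "h1 a \<le> h1 b" using that by (intro mono_onD[OF h1_mono]) auto
    ultimately show ?thesis unfolding H_def by simp
  qed
  have Hlip: "\<bar>H a - H b\<bar> \<le> L * \<bar>a - b\<bar>" if "a \<in> {0..1}" "b \<in> {0..1}" for a b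
  proof -
    have "dist (h2 (1 - a)) (h2 (1 - b)) \<le> L2 * dist (1 - a) (1 - b)"
      using that by (intro lipschitz_onD[OF L2]) auto
    moreover have "dist (h1 a) (h1 b) \<le> L1 * dist a b"
      using that by (intro lipschitz_onD[OF L1]) auto
    ultimately have "\<bar>h2 (1 - a) - h2 (1 - b)\<bar> + \<bar>h1 a - h1 b\<bar> \<le> L * \<bar>a - b\<bar>"
      unfolding L_def dist_real_def by (simp add: algebra_simps abs_minus_commute)
    then show ?thesis unfolding H_def by linarith
  qed
  have mst01: "mst \<in> {0..1}" unfolding mst_def using M01 by auto
  obtain \<Lambda>0 where \<Lambda>0: "\<Lambda>0 \<ge> 0" "\<And>t. t < tb \<Longrightarrow> mst < 1 \<Longrightarrow> mst - M t \<le> \<Lambda>0 * (tb - t)"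
  proof (cases "mst < 1")
    case True
    obtain \<Lambda> where "\<Lambda> \<ge> 0" "\<forall>t<tb. mfun \<Omega> f p x1 x2 tb - mfun \<Omega> f p x1 x2 t \<le> \<Lambda> * (tb - t)"
      using slab_bound[OF p_ge \<Omega>_bdd ms fa f_nonneg fB f_int] True unfolding mst_def M_def by blast
    then show ?thesis using that unfolding mst_def M_def by blast
  next
    case False then show ?thesis using that[of 0] by auto
  qed
  define \<Lambda> where "\<Lambda> = \<Lambda>0 * L"
  have \<Lambda>ge: "\<Lambda> \<ge> 0" unfolding \<Lambda>_def using \<Lambda>0 L0 by simp
  define \<rho>bar where "\<rho>bar = max (1/2) (\<Lambda> / (1 + \<Lambda>))"
  have rb1: "\<Lambda> / (1 + \<Lambda>) < 1" using \<Lambda>ge by simp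
  show ?thesis
  proof (rule bexI[of _ \<rho>bar], intro ballI allI impI)
    show "\<rho>bar \<in> {0<..<1}" unfolding \<rho>bar_def using rb1 by auto
    fix \<rho> :: real and \<psi>0 :: "'a \<Rightarrow> real" and K :: "'a set"
    assume \<rho>: "\<rho> \<in> {\<rho>bar<..<1}"
      and \<psi>0: "\<psi>0 \<in> borel_measurable borel \<and> (\<forall>x\<in>\<Omega>. \<psi>0 x \<in> {0..1})"
      and K: "compact K \<and> K \<subseteq> \<Omega> - {x. tau p x1 x2 x = tbar \<Omega> f p x1 x2 h1 h2}"
    have r0: "0 < \<rho>" "\<rho> < 1" using \<rho> unfolding \<rho>bar_def by auto
    have r2: "(1 - \<rho>) * \<Lambda> \<le> \<rho>"
    proof -
      have "\<Lambda> / (1 + \<Lambda>) < \<rho>" using \<rho> unfolding \<rho>bar_def by auto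
      then have "\<Lambda> < \<rho> * (1 + \<Lambda>)" using \<Lambda>ge by (simp add: field_simps)
      then show ?thesis by (simp add: algebra_simps)
    qed
    define \<psi> where "\<psi> = psi_seq \<Omega> f p x1 x2 h1 h2 \<rho> \<psi>0"
    define mm where "mm j = integral \<Omega> (\<lambda>x. (1 - \<psi> j x) * f x)" for j
    define tt where "tt j = H (mm j)" for j
    have \<psi>S: "\<psi> (Suc j) = (\<lambda>x. if tau p x1 x2 x < tt j then \<rho> * \<psi> j x else 1 - \<rho> * (1 - \<psi> j x))" for j
      unfolding \<psi>_def tt_def H_def mm_def by (simp add: Let_def)
    have \<psi>Z: "\<psi> 0 = \<psi>0" unfolding \<psi>_def by simp
    have \<psi>m: "\<psi> j \<in> borel_measurable borel" for j
    proof (induction j)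
      case 0 then show ?case using \<psi>Z \<psi>0 by simp
    next
      case (Suc j)
      have "{x \<in> space borel. tau p x1 x2 x < tt j} \<in> sets borel"
        using tau_borel[OF p0] by measurable
      then show ?case unfolding \<psi>S using Suc
        by (intro measurable_If) (auto intro!: borel_measurable_times borel_measurable_diff)
    qed
    have \<psi>b: "\<psi> j x \<in> {0..1}" if "x \<in> \<Omega>" for j x
    proof (induction j)
      case 0 then show ?case using \<psi>Z \<psi>0 that by simp
    next
      case (Suc j)
      then have "0 \<le> \<rho> * \<psi> j x" "\<rho> * \<psi> j x \<le> 1" "0 \<le> \<rho> * (1 - \<psi> j x)" "\<rho> * (1 - \<psi> j x) \<le> 1"
        using r0 by (auto intro!: mult_nonneg_nonneg mult_le_one)
      then show ?case unfolding \<psi>S by auto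
    qed
    have gint: "(\<lambda>x. (1 - \<psi> j x) * f x) absolutely_integrable_on \<Omega>" for j
      by (rule prod_int[OF fa ms, of _ 1]) (use \<psi>m \<psi>b in auto)
    have gi: "(\<lambda>x. (1 - \<psi> j x) * f x) integrable_on \<Omega>" for j
      using gint[of j] unfolding absolutely_integrable_on_def by blast
    have mm01: "0 \<le> mm j" "mm j \<le> 1" for j
    proof -
      show "0 \<le> mm j" unfolding mm_def using gi \<psi>b f_nonneg
        by (intro integral_nonneg) (auto intro!: mult_nonneg_nonneg)
      have "mm j \<le> integral \<Omega> f" unfolding mm_def using gi fi \<psi>b f_nonneg
        by (intro integral_le) (auto simp: mult_le_cancel_right1 intro: mult_left_le_one_le)
      then show "mm j \<le> 1" using f_int by (simp add: integral_unique)
    qed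
    define I where "I t x = (if tau p x1 x2 x \<in> {..<t} then 1 else 0) * f x" for t x
    have Ii: "I t integrable_on \<Omega>" for t
    proof -
      have "I t absolutely_integrable_on \<Omega>" unfolding I_def by (rule ind_int(2)[OF fa ms p0]) simp
      then show ?thesis unfolding absolutely_integrable_on_def by blast
    qed
    have MI: "M t = integral \<Omega> (I t)" for t unfolding M_def I_def by (rule mfun_int[OF fa ms p0])
    have mmrec: "mm (Suc j) = \<rho> * mm j + (1 - \<rho>) * M (tt j)" for j
    proof -
      have pw: "(1 - \<psi> (Suc j) x) * f x = \<rho> * ((1 - \<psi> j x) * f x) + (1 - \<rho>) * I (tt j) x" for x
        unfolding \<psi>S I_def by (auto simp: algebra_simps)
      have "mm (Suc j) = integral \<Omega> (\<lambda>x. \<rho> * ((1 - \<psi> j x) * f x) + (1 - \<rho>) * I (tt j) x)"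
        unfolding mm_def pw ..
      also have "\<dots> = integral \<Omega> (\<lambda>x. \<rho> * ((1 - \<psi> j x) * f x)) + integral \<Omega> (\<lambda>x. (1 - \<rho>) * I (tt j) x)"
        by (rule integral_add) (use integrable_on_cmult_left[OF gi] integrable_on_cmult_left[OF Ii] in auto)
      also have "\<dots> = \<rho> * mm j + (1 - \<rho>) * M (tt j)"
        unfolding mm_def MI using integral_mult[OF gi, of \<rho> j] integral_mult[OF Ii, of "1 - \<rho>" "tt j"] by simp
      finally show ?thesis .
    qed
    have mmconv: "mm \<longlonglongrightarrow> mst"
    proof (rule dyn_conv[where F="\<lambda>j. M (tt j)" and \<Lambda>=\<Lambda>])
      show "mm (Suc j) = \<rho> * mm j + (1 - \<rho>) * M (tt j)" for j by (rule mmrec)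
      show "mst \<le> M (tt j)" if "mm j \<le> mst" for j
      proof -
        have "tb \<le> tt j" unfolding tt_def Hm[symmetric] using that mm01[of j] mst01 by (intro Hanti) auto
        then show ?thesis unfolding mst_def by (rule Mmono)
      qed
      show "M (tt j) \<le> mst \<and> mst - M (tt j) \<le> \<Lambda> * (mm j - mst)" if a: "mst \<le> mm j" for j
      proof -
        have tle: "tt j \<le> tb" unfolding tt_def Hm[symmetric] using a mm01[of j] mst01 by (intro Hanti) auto
        have 1: "M (tt j) \<le> mst" unfolding mst_def by (rule Mmono[OF tle])
        have tdiff: "tb - tt j \<le> L * (mm j - mst)"
        proof -
          have "\<bar>H mst - H (mm j)\<bar> \<le> L * \<bar>mst - mm j\<bar>" using mst01 mm01[of j] by (intro Hlip) auto
          then show ?thesis unfolding tt_def Hm[symmetric] using a by (simp add: abs_if split: if_splits)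
        qed
        have 2: "mst - M (tt j) \<le> \<Lambda> * (mm j - mst)"
        proof (cases "tt j < tb")
          case True
          have "mst < 1"
          proof (rule ccontr)
            assume "\<not> mst < 1"
            then have "mm j = mst" using a mm01[of j] mst01 by auto
            then show False using True Hm unfolding tt_def by simp
          qed
          then have "mst - M (tt j) \<le> \<Lambda>0 * (tb - tt j)" using \<Lambda>0(2)[OF True] by blast
          also have "\<dots> \<le> \<Lambda>0 * (L * (mm j - mst))" using tdiff \<Lambda>0(1) by (intro mult_left_mono)
          finally show ?thesis unfolding \<Lambda>_def by (simp add: mult.assoc)
        next
          case False
          then have "tt j = tb" using tle by simp
          then show ?thesis using a \<Lambda>ge unfolding mst_def by simp
        qed
        show ?thesis using 1 2 by simp
      qed
      show "0 < \<rho>" "\<rho> < 1" "(1 - \<rho>) * \<Lambda> \<le> \<rho>" using r0 r2 by auto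
      show "\<bar>mm j - mst\<bar> \<le> 1" for j using mm01[of j] mst01 by auto
    qed
    have ttconv: "tt \<longlonglongrightarrow> tb"
    proof -
      have "(\<lambda>j. L * \<bar>mm j - mst\<bar>) \<longlonglongrightarrow> L * \<bar>mst - mst\<bar>"
        by (intro tendsto_intros mmconv)
      then have l0: "(\<lambda>j. L * \<bar>mm j - mst\<bar>) \<longlonglongrightarrow> 0" by simp
      have "(\<lambda>j. tt j - tb) \<longlonglongrightarrow> 0"
      proof (rule Lim_null_comparison[OF _ l0])
        show "\<forall>\<^sub>F j in sequentially. norm (tt j - tb) \<le> L * \<bar>mm j - mst\<bar>"
          using Hlip mm01 mst01 unfolding tt_def Hm[symmetric] by (intro always_eventually) auto
      qed
      then have "(\<lambda>j. (tt j - tb) + tb) \<longlonglongrightarrow> 0 + tb" by (intro tendsto_intros)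
      then show ?thesis by simp
    qed
    have Kc: "compact K" and Ksub: "K \<subseteq> \<Omega>" and Kne: "\<forall>x\<in>K. tau p x1 x2 x \<noteq> tb"
      using K unfolding tb_def by auto
    have pb: "psibar \<Omega> f p x1 x2 h1 h2 x = (if tau p x1 x2 x < tb then 0 else 1)" for x
      unfolding psibar_def tb_def ..
    show "uniform_limit K (psi_seq \<Omega> f p x1 x2 h1 h2 \<rho> \<psi>0) (psibar \<Omega> f p x1 x2 h1 h2) sequentially"
    proof (cases "K = {}")
      case True then show ?thesis by (simp add: uniform_limit_iff)
    next
      case False
      have ctK: "continuous_on K (\<lambda>x. \<bar>tau p x1 x2 x - tb\<bar>)"
        by (intro continuous_intros continuous_on_subset[OF tau_cont[OF p0]]) auto
      obtain x0 where x0: "x0 \<in> K" "\<forall>x\<in>K. \<bar>tau p x1 x2 x0 - tb\<bar> \<le> \<bar>tau p x1 x2 x - tb\<bar>"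
        using continuous_attains_inf[OF Kc False ctK] by blast
      define \<delta> where "\<delta> = \<bar>tau p x1 x2 x0 - tb\<bar>"
      have \<delta>0: "\<delta> > 0" using Kne x0 unfolding \<delta>_def by auto
      have \<delta>K: "\<delta> \<le> \<bar>tau p x1 x2 x - tb\<bar>" if "x \<in> K" for x using x0 that unfolding \<delta>_def by auto
      obtain J where J: "\<And>j. j \<ge> J \<Longrightarrow> norm (tt j - tb) < \<delta>" using LIMSEQ_D[OF ttconv \<delta>0] by blast
      have lowc: "\<psi> (J + i) x = \<rho> ^ i * \<psi> J x" if "x \<in> K" "tau p x1 x2 x < tb" for x i
      proof (induction i)
        case 0 then show ?case by simp
      next
        case (Suc i)
        have "tau p x1 x2 x \<le> tb - \<delta>" using \<delta>K[OF that(1)] that(2) by simp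
        moreover have "tb - \<delta> < tt (J + i)" using J[of "J + i"] by simp
        ultimately have "tau p x1 x2 x < tt (J + i)" by simp
        then have "\<psi> (Suc (J + i)) x = \<rho> * \<psi> (J + i) x" unfolding \<psi>S by simp
        then show ?case using Suc by simp
      qed
      have highc: "1 - \<psi> (J + i) x = \<rho> ^ i * (1 - \<psi> J x)" if "x \<in> K" "\<not> tau p x1 x2 x < tb" for x i
      proof (induction i)
        case 0 then show ?case by simp
      next
        case (Suc i)
        have "tau p x1 x2 x \<ge> tb + \<delta>" using \<delta>K[OF that(1)] that(2) by simp
        moreover have "tt (J + i) < tb + \<delta>" using J[of "J + i"] by simp
        ultimately have "\<not> tau p x1 x2 x < tt (J + i)" by simp
        then have "1 - \<psi> (Suc (J + i)) x = \<rho> * (1 - \<psi> (J + i) x)" unfolding \<psi>S by simp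
        then show ?case using Suc by simp
      qed
      show ?thesis unfolding \<psi>_def[symmetric]
      proof (rule uniform_limitI)
        fix e :: real assume e: "e > 0"
        obtain k0 where k0: "\<rho> ^ k0 < e" using real_arch_pow_inv[OF e r0(2)] by blast
        show "\<forall>\<^sub>F n in sequentially. \<forall>x\<in>K. dist (\<psi> n x) (psibar \<Omega> f p x1 x2 h1 h2 x) < e"
        proof (rule eventually_sequentiallyI[of "J + k0"], intro ballI)
          fix n x assume n: "J + k0 \<le> n" and x: "x \<in> K"
          define i where "i = n - J"
          have ni: "n = J + i" "k0 \<le> i" using n unfolding i_def by auto
          have xO: "x \<in> \<Omega>" using x Ksub by auto
          have pw: "\<rho> ^ i \<le> \<rho> ^ k0" using ni r0 by (intro power_decreasing) auto
          have r0i: "0 \<le> \<rho> ^ i" using r0 by simp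
          have psJ: "0 \<le> \<psi> J x" "\<psi> J x \<le> 1" using \<psi>b[OF xO, of J] by auto
          show "dist (\<psi> n x) (psibar \<Omega> f p x1 x2 h1 h2 x) < e"
          proof (cases "tau p x1 x2 x < tb")
            case True
            have "dist (\<psi> n x) (psibar \<Omega> f p x1 x2 h1 h2 x) = \<rho> ^ i * \<psi> J x"
              unfolding pb ni(1) lowc[OF x True] using True r0i psJ by (simp add: dist_real_def)
            also have "\<dots> \<le> \<rho> ^ i" using r0i psJ by (simp add: mult_left_le)
            finally show ?thesis using pw k0 by simp
          next
            case False
            have "dist (\<psi> n x) (psibar \<Omega> f p x1 x2 h1 h2 x) = \<bar>1 - \<psi> (J + i) x\<bar>"
              unfolding pb ni(1) using False by (simp add: dist_real_def abs_minus_commute)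
            also have "\<dots> = \<rho> ^ i * (1 - \<psi> J x)" unfolding highc[OF x False] using r0i psJ by simp
            also have "\<dots> \<le> \<rho> ^ i" using r0i psJ by (simp add: mult_left_le)
            finally show ?thesis using pw k0 by simp
          qed
        qed
      qed
    qed
  qed
qed
end
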